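(* Let $n$ be a positive integer, $B=\{x\in\mathbb{R}^n:\|x\|_2\le1\}$, $\mathcal{U}$ the uniform distribution on $B$, and $p$ the distribution on $\mathbb{R}^n$ that with probability $1/2$ draws $Z\sim\mathcal{U}$ and with probability $1/2$ draws a uniformly random element of $\{\pm e_1,\dots,\pm e_n\}$ (the signed standard basis vectors). Let $\lambda>0$, $k$ a positive integer, $\delta\in(0,1]$, $\sigma\in(0,1]$, let $d_{t-1}\in\mathbb{R}^n$ be any fixed vector, and let $\Phi_{t-1}=\mathbb{E}_{W\sim p}[\cosh(\lambda d_{t-1}^\top W)]$. If $X_t$ is sampled from an arbitrary $\sigma$-smooth distribution on $B$, then $$\Pr_{X_t}\!\left[\lambda d_{t-1}^\top X_t\ge 4\ln\!\left(\frac{4k\Phi_{t-1}}{\delta}\right)\right]\le(1-\sigma)^k+\delta.$$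
   Context: A distribution $\mu$ on $B$ is $\sigma$-smooth if $\mu(A)\le\mathcal{U}(A)/\sigma$ for all measurable $A\subseteq B$. *)

theory Defs
  imports "HOL-Probability.Probability"
begin

definition unit_ball :: "(real ^ 'n) set" where
  "unit_ball = cball 0 1"

definition unif_ball :: "(real ^ 'n) measure" where
  "unif_ball = uniform_measure lborel unit_ball"

definition signed_basis :: "(real ^ 'n) set" where
  "signed_basis = {axis i 1 | i. True} \<union> {axis i (-1) | i. True}"

definition signed_basis_pmf :: "(real ^ 'n) pmf" where
  "signed_basis_pmf = pmf_of_set signed_basis"

definition mix_p :: "(real ^ 'n) measure" where
  "mix_p = measure_of UNIV (sets borel)
     (\<lambda>A. ennreal (1/2) * emeasure unif_ball A
          + ennreal (1/2) * emeasure (measure_pmf signed_basis_pmf) A)"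

definition Phi :: "real \<Rightarrow> real ^ 'n \<Rightarrow> real" where
  "Phi lam d = (\<integral>w. cosh (lam * (d \<bullet> w)) \<partial>mix_p)"

definition sigma_smooth :: "real \<Rightarrow> (real ^ 'n) measure \<Rightarrow> bool" where
  "sigma_smooth \<sigma> \<mu> \<longleftrightarrow>
     prob_space \<mu> \<and> sets \<mu> = sets borel \<and> emeasure \<mu> unit_ball = 1 \<and>
     (\<forall>A \<in> sets borel. A \<subseteq> unit_ball \<longrightarrow> measure \<mu> A \<le> measure unif_ball A / \<sigma>)"

end

theory Submission
  imports Defs
begin

lemma sets_unif_ball[simp]: "sets (unif_ball :: (real^'n) measure) = sets borel"
  unfolding unif_ball_def by simp

lemma prob_unif_ball: "prob_space (unif_ball :: (real^'n) measure)"
proof -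
  have "measure lborel (cball (0::real^'n) 1) > 0" using content_cball_pos[of 1 "0::real^'n"] by simp
  then have "emeasure lborel (cball (0::real^'n) 1) \<noteq> 0"
    using emeasure_lborel_cball_finite[of "0::real^'n" 1]
    by (simp add: emeasure_eq_ennreal_measure)
  then show ?thesis unfolding unif_ball_def unit_ball_def
    using emeasure_lborel_cball_finite[of "0::real^'n" 1]
    by (intro prob_space_uniform_measure) auto
qed

lemma signed_basis_finite: "finite (signed_basis :: (real^'n) set)"
proof -
  have "signed_basis = (\<lambda>i. axis i (1::real)) ` UNIV \<union> (\<lambda>i. axis i (-1::real)) ` (UNIV :: 'n set)"
    unfolding signed_basis_def by auto
  then show ?thesis by (metis finite_UnI finite finite_imageI)
qed

lemma signed_basis_ne: "(signed_basis :: (real^'n) set) \<noteq> {}"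
  unfolding signed_basis_def by auto

lemma signed_basis_ball: "(signed_basis :: (real^'n) set) \<subseteq> cball 0 1"
proof -
  have "axis i (-1::real) = - axis i 1" for i :: 'n by (simp add: axis_def vec_eq_iff)
  then show ?thesis unfolding signed_basis_def by auto
qed

lemma set_pmf_sb: "set_pmf (signed_basis_pmf :: (real^'n) pmf) = signed_basis"
  unfolding signed_basis_pmf_def by (rule set_pmf_of_set[OF signed_basis_ne signed_basis_finite])

definition mixf :: "(real^'n) set \<Rightarrow> ennreal" where
  "mixf A = ennreal (1/2) * emeasure unif_ball A
          + ennreal (1/2) * emeasure (measure_pmf signed_basis_pmf) A"

lemma emeasure_mix_p:
  assumes "A \<in> sets borel"
  shows "emeasure (mix_p :: (real^'n) measure) A = mixf A"
proof -
  have "sigma_algebra UNIV (sets (borel :: (real^'n) measure))"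
    using sets.sigma_algebra_axioms[of "borel :: (real^'n) measure"] by simp
  moreover have "positive (sets borel) (mixf :: (real^'n) set \<Rightarrow> ennreal)"
    unfolding positive_def mixf_def by simp
  moreover have "countably_additive (sets borel) (mixf :: (real^'n) set \<Rightarrow> ennreal)"
    unfolding countably_additive_def
  proof safe
    fix F :: "nat \<Rightarrow> (real^'n) set"
    assume r: "range F \<subseteq> sets borel" and dj: "disjoint_family F"
    have u: "(\<Sum>i. emeasure unif_ball (F i)) = emeasure unif_ball (\<Union>i. F i)"
      using r dj by (intro suminf_emeasure) auto
    have p: "(\<Sum>i. emeasure (measure_pmf signed_basis_pmf) (F i)) = emeasure (measure_pmf signed_basis_pmf) (\<Union>i. F i)"
      using dj by (intro suminf_emeasure) auto
    show "(\<Sum>i. mixf (F i)) = mixf (\<Union>i. F i)"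
      unfolding mixf_def
      by (simp add: suminf_add[symmetric] ennreal_suminf_cmult u[symmetric] p[symmetric])
  qed
  ultimately show ?thesis unfolding mix_p_def mixf_def[symmetric]
    using assms by (intro emeasure_measure_of_sigma) auto
qed

lemma sets_mix_p[simp]: "sets (mix_p :: (real^'n) measure) = sets borel"
  unfolding mix_p_def using sets.sigma_sets_eq[of "borel :: (real^'n) measure"] by (simp add: sets_measure_of)

lemma space_mix_p[simp]: "space (mix_p :: (real^'n) measure) = UNIV"
  unfolding mix_p_def by (simp add: space_measure_of_conv)


lemma space_unif_ball[simp]: "space (unif_ball :: (real^'n) measure) = UNIV"
  unfolding unif_ball_def by simp

lemma mix_p_ge: "scale_measure (1/2) (unif_ball :: (real^'n) measure) \<le> mix_p"
proof -
  have "emeasure (scale_measure (1/2) (unif_ball :: (real^'n) measure)) A \<le> emeasure mix_p A" for A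
  proof (cases "A \<in> sets borel")
    case True
    then show ?thesis by (simp add: emeasure_mix_p mixf_def divide_ennreal_def add_increasing2)
  next
    case False
    then show ?thesis by (simp add: emeasure_notin_sets)
  qed
  then show ?thesis unfolding le_measure_iff
    by (auto simp: space_scale_measure le_fun_def)
qed

lemma half_half: "ennreal (1/2) + ennreal (1/2) = 1"
  by (simp only: ennreal_plus[symmetric] divide_nonneg_nonneg zero_le_one zero_le_numeral) simp

lemma mix_p_space: "emeasure (mix_p :: (real^'n) measure) UNIV = 1"
proof -
  interpret U: prob_space "unif_ball :: (real^'n) measure" by (rule prob_unif_ball)
  have "emeasure (unif_ball :: (real^'n) measure) UNIV = 1" using U.emeasure_space_1 by simp
  then show ?thesis
    by (simp add: emeasure_mix_p mixf_def measure_pmf.emeasure_space_1[simplified])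
       (use half_half in simp)
qed

lemma mix_p_prob: "prob_space (mix_p :: (real^'n) measure)"
  by (rule prob_spaceI) (simp add: mix_p_space)

lemma mix_p_null: "emeasure (mix_p :: (real^'n) measure) (- cball 0 1) = 0"
proof -
  have b: "- cball (0::real^'n) 1 \<in> sets borel" by auto
  have "emeasure (unif_ball :: (real^'n) measure) (- cball 0 1) = 0"
    unfolding unif_ball_def unit_ball_def
    by (subst emeasure_uniform_measure) (auto)
  moreover have "emeasure (measure_pmf (signed_basis_pmf :: (real^'n) pmf)) (- cball 0 1) = 0"
  proof -
    have "- cball 0 1 \<inter> set_pmf (signed_basis_pmf :: (real^'n) pmf) = {}"
      using set_pmf_sb signed_basis_ball by auto
    then show ?thesis using emeasure_Int_set_pmf[of "signed_basis_pmf :: (real^'n) pmf" "- cball 0 1"]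
      by simp
  qed
  ultimately show ?thesis using b by (simp add: emeasure_mix_p mixf_def)
qed

lemma cosh_bound:
  fixes d w :: "real^'n"
  assumes "w \<in> cball 0 1"
  shows "cosh (lam * (d \<bullet> w)) \<le> cosh (\<bar>lam\<bar> * norm d)"
proof -
  have "\<bar>d \<bullet> w\<bar> \<le> norm d * norm w" by (rule Cauchy_Schwarz_ineq2)
  also have "\<dots> \<le> norm d" using assms by (simp add: mult_left_le)
  finally have "\<bar>lam * (d \<bullet> w)\<bar> \<le> \<bar>lam\<bar> * norm d"
    by (simp add: abs_mult mult_left_mono)
  then have "cosh \<bar>lam * (d \<bullet> w)\<bar> \<le> cosh (\<bar>lam\<bar> * norm d)"
    by (subst cosh_real_nonneg_le_iff) auto
  then show ?thesis by simp
qed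

lemma integrable_cosh: "integrable (mix_p :: (real^'n) measure) (\<lambda>w. cosh (lam * (d \<bullet> w)))"
proof -
  interpret P: prob_space "mix_p :: (real^'n) measure" by (rule mix_p_prob)
  have "AE w in (mix_p :: (real^'n) measure). w \<in> cball 0 1"
    by (rule AE_I'[of "- cball 0 1"]) (auto simp: mix_p_null)
  then have "AE w in (mix_p :: (real^'n) measure). norm (cosh (lam * (d \<bullet> w))) \<le> cosh (\<bar>lam\<bar> * norm d)"
    by eventually_elim (use cosh_bound in \<open>auto simp: abs_of_nonneg\<close>)
  moreover have "(\<lambda>w. cosh (lam * (d \<bullet> w))) \<in> borel_measurable (mix_p :: (real^'n) measure)"
    by (subst measurable_cong_sets[OF sets_mix_p refl]) (intro borel_measurable_continuous_onI continuous_intros)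
  ultimately show ?thesis by (intro P.integrable_const_bound) auto
qed

lemma key_real:
  fixes \<sigma> m u :: real and k :: nat
  assumes "0 < \<sigma>" "\<sigma> \<le> 1" "m \<le> 1" "m \<le> u / \<sigma>" "0 \<le> u"
  shows "m \<le> (1 - \<sigma>) ^ k + k * u"
proof -
  have su: "\<sigma> * m \<le> u" using assms by (simp add: field_simps)
  show ?thesis
  proof (cases "k * \<sigma> \<le> 1")
    case True
    have "1 + k * (-\<sigma>) \<le> (1 + (-\<sigma>)) ^ k" using assms by (intro Bernoulli_inequality) auto
    moreover have "(1 - m) * (1 - k * \<sigma>) \<ge> 0" using True assms by auto
    moreover have "k * (\<sigma> * m) \<le> k * u" using su by (simp add: mult_left_mono)
    ultimately show ?thesis by (simp add: algebra_simps)
  next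
    case False
    have "0 \<le> (1 - \<sigma>) ^ k" using assms by simp
    show ?thesis
    proof (cases "m \<le> 0")
      case True
      have "0 \<le> real k * u" using assms by simp
      then show ?thesis using \<open>0 \<le> (1 - \<sigma>) ^ k\<close> True by linarith
    next
      case c: False
      have "m \<le> (k * \<sigma>) * m" using False c by (simp add: mult_le_cancel_right1)
      also have "\<dots> = k * (\<sigma> * m)" by simp
      also have "\<dots> \<le> k * u" using su by (simp add: mult_left_mono)
      finally show ?thesis using \<open>0 \<le> (1 - \<sigma>) ^ k\<close> by simp
    qed
  qed
qed


theorem mainTheorem6:
  fixes lam \<delta> \<sigma> :: real and k :: nat and d :: "real ^ 'n" and \<mu> :: "(real ^ 'n) measure"
  assumes "lam > 0" and "k > 0"
    and "0 < \<delta>" and "\<delta> \<le> 1" and "0 < \<sigma>" and "\<sigma> \<le> 1"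
    and "sigma_smooth \<sigma> \<mu>"
  shows "measure \<mu> {x. lam * (d \<bullet> x) \<ge> 4 * ln (4 * real k * Phi lam d / \<delta>)}
           \<le> (1 - \<sigma>) ^ k + \<delta>"
proof -
  interpret U: prob_space "unif_ball :: (real^'n) measure" by (rule prob_unif_ball)
  define f where "f = (\<lambda>w::real^'n. cosh (lam * (d \<bullet> w)))"
  define P where "P = Phi lam d"
  define T where "T = 4 * ln (4 * real k * P / \<delta>)"
  define S where "S = {x::real^'n. T \<le> lam * (d \<bullet> x)}"
  have fm: "f \<in> borel_measurable borel" unfolding f_def
    by (intro borel_measurable_continuous_onI continuous_intros)
  have fU: "f \<in> borel_measurable (unif_ball :: (real^'n) measure)"
    using fm by (subst measurable_cong_sets[OF sets_unif_ball refl])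
  have f1: "1 \<le> f x" for x
  proof -
    have "cosh 0 \<le> cosh \<bar>lam * (d \<bullet> x)\<bar>" by (subst cosh_real_nonneg_le_iff) auto
    then show ?thesis unfolding f_def by simp
  qed
  have Sb: "S \<in> sets borel" unfolding S_def by measurable
  have Pnn: "ennreal P = (\<integral>\<^sup>+ w. ennreal (f w) \<partial>mix_p)"
    unfolding P_def Phi_def f_def
    using integrable_cosh by (subst nn_integral_eq_integral) auto
  have P0: "0 \<le> P" unfolding P_def Phi_def by (intro integral_nonneg_AE) auto
  have "(1/2::ennreal) * (\<integral>\<^sup>+ w. ennreal (f w) \<partial>unif_ball) = (\<integral>\<^sup>+ w. ennreal (f w) \<partial>scale_measure (1/2) unif_ball)"
    using fU by (subst nn_integral_scale_measure) auto
  also have "\<dots> \<le> (\<integral>\<^sup>+ w. ennreal (f w) \<partial>mix_p)"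
    by (intro nn_integral_mono_measure mix_p_ge) simp
  finally have half: "(1/2::ennreal) * (\<integral>\<^sup>+ w. ennreal (f w) \<partial>unif_ball) \<le> ennreal P"
    using Pnn by simp
  have "(1::ennreal) = (\<integral>\<^sup>+ w. 1 \<partial>(unif_ball :: (real^'n) measure))"
    using U.emeasure_space_1 by simp
  also have "\<dots> \<le> (\<integral>\<^sup>+ w. ennreal (f w) \<partial>unif_ball)"
    using f1 by (intro nn_integral_mono) simp
  finally have I1: "1 \<le> (\<integral>\<^sup>+ w. ennreal (f w) \<partial>unif_ball)" .
  have "ennreal (exp T / 2) * emeasure unif_ball S = (\<integral>\<^sup>+ w. ennreal (exp T / 2) * indicator S w \<partial>unif_ball)"
    using Sb by (subst nn_integral_cmult_indicator) auto
  also have "\<dots> \<le> (\<integral>\<^sup>+ w. ennreal (f w) \<partial>unif_ball)"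
  proof (intro nn_integral_mono)
    fix w
    show "ennreal (exp T / 2) * indicator S w \<le> ennreal (f w)"
    proof (cases "w \<in> S")
      case True
      then have "exp T \<le> exp (lam * (d \<bullet> w))" unfolding S_def by simp
      moreover have "exp (lam * (d \<bullet> w)) / 2 \<le> f w"
        unfolding f_def cosh_def by simp
      ultimately have "exp T / 2 \<le> f w" by linarith
      then show ?thesis using True by (simp add: ennreal_leI)
    qed simp
  qed
  finally have IS: "ennreal (exp T / 2) * emeasure unif_ball S \<le> (\<integral>\<^sup>+ w. ennreal (f w) \<partial>unif_ball)" .
  define u where "u = measure unif_ball S"
  have u0: "0 \<le> u" unfolding u_def by simp
  have Su: "emeasure unif_ball S = ennreal u" unfolding u_def by (simp add: U.emeasure_eq_measure)
  have half_eq: "(1/2::ennreal) = ennreal (1/2)"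
    by (simp add: divide_ennreal_def )
  have "ennreal (1/2) * 1 \<le> ennreal (1/2) * (\<integral>\<^sup>+ w. ennreal (f w) \<partial>unif_ball)"
    using I1 by (intro mult_left_mono) auto
  with half half_eq have "ennreal (1/2) \<le> ennreal P" by simp
  then have P2: "1/2 \<le> P" using P0 ennreal_le_iff by blast
  have "ennreal (exp T / 4 * u) = ennreal (1/2) * (ennreal (exp T / 2) * emeasure unif_ball S)"
  proof -
    have e1: "exp T / 4 * u = 1/2 * (exp T / 2 * u)" by simp
    have e2: "ennreal (1/2 * (exp T / 2 * u)) = ennreal (1/2) * ennreal (exp T / 2 * u)"
      using u0 by (intro ennreal_mult) auto
    have e3: "ennreal (exp T / 2 * u) = ennreal (exp T / 2) * ennreal u"
      using u0 by (intro ennreal_mult) auto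
    show ?thesis unfolding e1 e2 e3 Su ..
  qed
  also have "\<dots> \<le> ennreal (1/2) * (\<integral>\<^sup>+ w. ennreal (f w) \<partial>unif_ball)"
    using IS by (intro mult_left_mono) auto
  also have "\<dots> \<le> ennreal P" using half half_eq by simp
  finally have PT: "exp T / 4 * u \<le> P" using P0 ennreal_le_iff by blast
  define a where "a = 4 * real k * P / \<delta>"
  have k1: "1 \<le> real k" using assms by simp
  have a2: "2 \<le> a"
  proof -
    have "2 * \<delta> \<le> 4 * real k * P"
    proof -
      have "1 * (1/2) \<le> real k * P" using P2 k1 by (intro mult_mono) auto
      then show ?thesis using assms(4) by linarith
    qed
    then show ?thesis unfolding a_def using assms(3) by (simp add: field_simps)
  qed
  have eT: "exp T = a ^ 4"
    unfolding T_def a_def[symmetric]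
    using exp_of_nat_mult[of 4 "ln a"] a2 by simp
  have aeq: "a * \<delta> = 4 * real k * P" unfolding a_def using assms(3) by simp
  have "a ^ 4 * u \<le> 4 * P" using PT eT by simp
  then have "real k * (a ^ 4 * u) \<le> real k * (4 * P)" by (intro mult_left_mono) auto
  moreover have "real k * (a ^ 4 * u) = (real k * u * a ^ 3) * a"
    by (simp add: power_numeral_reduce)
  moreover have "real k * (4 * P) = \<delta> * a" using aeq by (simp add: mult.commute mult.left_commute)
  ultimately have "(real k * u * a ^ 3) * a \<le> \<delta> * a" by metis
  then have ku3: "real k * u * a ^ 3 \<le> \<delta>" using a2 by simp
  have "real k * u * 1 \<le> real k * u * a ^ 3"
    using a2 u0 by (intro mult_left_mono) (auto simp: one_le_power)
  with ku3 have ku: "real k * u \<le> \<delta>" by simp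
  have sm: "prob_space \<mu>" "sets \<mu> = sets borel" "emeasure \<mu> unit_ball = 1"
    "\<And>A. A \<in> sets borel \<Longrightarrow> A \<subseteq> unit_ball \<Longrightarrow> measure \<mu> A \<le> measure unif_ball A / \<sigma>"
    using assms(7) unfolding sigma_smooth_def by auto
  interpret M: prob_space \<mu> by (rule sm(1))
  have spM: "space \<mu> = UNIV" using sets_eq_imp_space_eq[OF sm(2)] by simp
  have Bb: "unit_ball \<in> sets borel" unfolding unit_ball_def by simp
  have SM: "S \<in> sets \<mu>" using Sb sm(2) by simp
  have BM: "unit_ball \<in> sets \<mu>" using Bb sm(2) by simp
  have mB: "measure \<mu> unit_ball = 1" using sm(3) by (simp add: M.emeasure_eq_measure)
  have "measure \<mu> S \<le> measure \<mu> (S \<inter> unit_ball) + measure \<mu> (S - unit_ball)"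
  proof -
    have "S = (S \<inter> unit_ball) \<union> (S - unit_ball)" by auto
    then have "measure \<mu> S = measure \<mu> ((S \<inter> unit_ball) \<union> (S - unit_ball))" by simp
    also have "\<dots> \<le> measure \<mu> (S \<inter> unit_ball) + measure \<mu> (S - unit_ball)"
      using SM BM by (intro measure_Un_le) auto
    finally show ?thesis .
  qed
  moreover have "measure \<mu> (S - unit_ball) \<le> measure \<mu> (space \<mu> - unit_ball)"
  proof -
    have cM: "space \<mu> - unit_ball \<in> sets \<mu>" using BM by (rule sets.compl_sets)
    have "S - unit_ball \<subseteq> space \<mu> - unit_ball" using spM by blast
    then show ?thesis by (rule M.finite_measure_mono[OF _ cM])
  qed
  moreover have "measure \<mu> (space \<mu> - unit_ball) = 0"
    using M.prob_compl[OF BM] mB by simp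
  ultimately have mS: "measure \<mu> S \<le> measure \<mu> (S \<inter> unit_ball)" by linarith
  have "measure \<mu> (S \<inter> unit_ball) \<le> measure unif_ball (S \<inter> unit_ball) / \<sigma>"
    using Sb Bb by (intro sm(4)) auto
  also have "\<dots> \<le> u / \<sigma>" unfolding u_def using assms(5) Sb
    by (intro divide_right_mono U.finite_measure_mono) auto
  finally have m1: "measure \<mu> (S \<inter> unit_ball) \<le> u / \<sigma>" .
  have m2: "measure \<mu> (S \<inter> unit_ball) \<le> 1" by simp
  have "measure \<mu> (S \<inter> unit_ball) \<le> (1 - \<sigma>) ^ k + real k * u"
    using key_real[OF assms(5,6) m2 m1 u0] .
  with mS ku have "measure \<mu> S \<le> (1 - \<sigma>) ^ k + \<delta>" by linarith
  then show ?thesis unfolding S_def T_def P_def .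
qed

end
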